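(* Let $M$ be a duplicial module in a pre-additive category. For all $n\ge0$, $$\kappa_n=(1-b_{n+1}d_n)(1-d_{n-1}b_n)=(1-d_{n-1}b_n)(1-b_{n+1}d_n).$$
   Context: Let $\mathcal A$ be a pre-additive category. Let $\Lambda_+$ be the category with objects $[n]$, $n\ge0$, where $\Lambda_+([m],[n])$ is the set of weakly monotone $f:\mathbb Z\to\mathbb Z$ with $f(j+m+1)=f(j)+n+1$ for all $j$ and $f(0)\ge0$. Define $\varepsilon^n_i:[n-1]\to[n]$ ($n\ge1$, $0\le i\le n$) by $\varepsilon^n_i(j)=j$ for $0\le j<i$, $j+1$ for $i\le j\le n-1$, and $\eta^n_i:[n+1]\to[n]$ ($0\le i\le n+1$) by $\eta^n_i(j)=j$ for $0\le j\le i$, $j-1$ for $i<j\le n+1$. A duplicial module is a functor $M:\Lambda_+^{op}\to\mathcal A$; $M_n=M([n])$, $\partial_{n,i}=M(\varepsilon^n_i):M_n\to M_{n-1}$, $s_{n,i}=M(\eta^n_i):M_n\to M_{n+1}$. Convention $M_{-1}=0$, maps into/out of it zero. Define $b_n=\sum_{i=0}^n(-1)^i\partial_{n,i}$ ($b_0=0$), $d_n=\sum_{i=0}^{n+1}(-1)^is_{n,i}$ ($d_{-1}=0$), and the Karoubi operator $\kappa_n=(-1)^n(\partial_{n+1,0}s_{n,n+1}-s_{n-1,n}\partial_{n,0})$ (so $\kappa_0=\partial_{1,0}s_{0,1}$). *)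

theory Defs
  imports Main
begin

text \<open>A (small) pre-additive category: objects of type 'o, morphisms of type 'm
  (every element of 'm is a morphism), with domain, codomain, composition
  (cmp g f = g after f, defined when pcod f = pdom g), identities, and an
  abelian group structure on every hom-set for which composition is bilinear.\<close>

record ('o, 'm) preadd_cat =
  pdom :: "'m \<Rightarrow> 'o"
  pcod :: "'m \<Rightarrow> 'o"
  cmp  :: "'m \<Rightarrow> 'm \<Rightarrow> 'm"
  idm  :: "'o \<Rightarrow> 'm"
  padd :: "'m \<Rightarrow> 'm \<Rightarrow> 'm"
  pzero :: "'o \<Rightarrow> 'o \<Rightarrow> 'm"
  pneg :: "'m \<Rightarrow> 'm"

definition hom :: "('o, 'm, 'x) preadd_cat_scheme \<Rightarrow> 'o \<Rightarrow> 'o \<Rightarrow> 'm set" where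
  "hom A a b = {f. pdom A f = a \<and> pcod A f = b}"

definition preadditive :: "('o, 'm, 'x) preadd_cat_scheme \<Rightarrow> bool" where
  "preadditive A \<longleftrightarrow>
     (\<forall>a. idm A a \<in> hom A a a) \<and>
     (\<forall>a b c f g. f \<in> hom A a b \<longrightarrow> g \<in> hom A b c \<longrightarrow> cmp A g f \<in> hom A a c) \<and>
     (\<forall>a b c d f g h. f \<in> hom A a b \<longrightarrow> g \<in> hom A b c \<longrightarrow> h \<in> hom A c d \<longrightarrow>
          cmp A h (cmp A g f) = cmp A (cmp A h g) f) \<and>
     (\<forall>a b f. f \<in> hom A a b \<longrightarrow> cmp A f (idm A a) = f \<and> cmp A (idm A b) f = f) \<and>
     (\<forall>a b. pzero A a b \<in> hom A a b) \<and>
     (\<forall>a b f g. f \<in> hom A a b \<longrightarrow> g \<in> hom A a b \<longrightarrow> padd A f g \<in> hom A a b) \<and>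
     (\<forall>a b f. f \<in> hom A a b \<longrightarrow> pneg A f \<in> hom A a b) \<and>
     (\<forall>a b f g h. f \<in> hom A a b \<longrightarrow> g \<in> hom A a b \<longrightarrow> h \<in> hom A a b \<longrightarrow>
          padd A (padd A f g) h = padd A f (padd A g h)) \<and>
     (\<forall>a b f g. f \<in> hom A a b \<longrightarrow> g \<in> hom A a b \<longrightarrow> padd A f g = padd A g f) \<and>
     (\<forall>a b f. f \<in> hom A a b \<longrightarrow> padd A f (pzero A a b) = f) \<and>
     (\<forall>a b f. f \<in> hom A a b \<longrightarrow> padd A f (pneg A f) = pzero A a b) \<and>
     (\<forall>a b c f g g'. f \<in> hom A a b \<longrightarrow> g \<in> hom A b c \<longrightarrow> g' \<in> hom A b c \<longrightarrow>
          cmp A (padd A g g') f = padd A (cmp A g f) (cmp A g' f)) \<and>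
     (\<forall>a b c f f' g. f \<in> hom A a b \<longrightarrow> f' \<in> hom A a b \<longrightarrow> g \<in> hom A b c \<longrightarrow>
          cmp A g (padd A f f') = padd A (cmp A g f) (cmp A g f'))"

text \<open>Morphisms of the category Lambda_+ from [m] to [n].\<close>

definition lam_hom :: "nat \<Rightarrow> nat \<Rightarrow> (int \<Rightarrow> int) set" where
  "lam_hom m n = {f. mono f \<and> (\<forall>j. f (j + int m + 1) = f j + int n + 1) \<and> f 0 \<ge> 0}"

text \<open>Coface and codegeneracy maps, extended periodically from their values
  on {0..n-1} resp. {0..n+1} (the extension is forced by the periodicity condition).\<close>

definition eps :: "nat \<Rightarrow> nat \<Rightarrow> int \<Rightarrow> int" where
  "eps n i j = (let q = j div int n; r = j mod int n in
                 (int n + 1) * q + (if r < int i then r else r + 1))"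

definition eta :: "nat \<Rightarrow> nat \<Rightarrow> int \<Rightarrow> int" where
  "eta n i j = (let q = j div (int n + 2); r = j mod (int n + 2) in
                 (int n + 1) * q + (if r \<le> int i then r else r - 1))"

text \<open>A duplicial module: a functor M : Lambda_+^op \<rightarrow> A, given by objects Mo n = M_n and
  Mf m n f = M(f) : M_n \<rightarrow> M_m for f in Lambda_+([m],[n]).\<close>

definition duplicial ::
  "('o, 'm, 'x) preadd_cat_scheme \<Rightarrow> (nat \<Rightarrow> 'o) \<Rightarrow> (nat \<Rightarrow> nat \<Rightarrow> (int \<Rightarrow> int) \<Rightarrow> 'm) \<Rightarrow> bool" where
  "duplicial A Mo Mf \<longleftrightarrow> preadditive A \<and>
     (\<forall>m n f. f \<in> lam_hom m n \<longrightarrow> Mf m n f \<in> hom A (Mo n) (Mo m)) \<and>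
     (\<forall>m. Mf m m id = idm A (Mo m)) \<and>
     (\<forall>m n p f g. f \<in> lam_hom m n \<longrightarrow> g \<in> lam_hom n p \<longrightarrow>
          Mf m p (g \<circ> f) = cmp A (Mf m n f) (Mf n p g))"

definition psub :: "('o, 'm, 'x) preadd_cat_scheme \<Rightarrow> 'm \<Rightarrow> 'm \<Rightarrow> 'm" where
  "psub A f g = padd A f (pneg A g)"

definition psign :: "('o, 'm, 'x) preadd_cat_scheme \<Rightarrow> nat \<Rightarrow> 'm \<Rightarrow> 'm" where
  "psign A i f = (if even i then f else pneg A f)"

definition psum :: "('o, 'm, 'x) preadd_cat_scheme \<Rightarrow> 'o \<Rightarrow> 'o \<Rightarrow> 'm list \<Rightarrow> 'm" where
  "psum A a b fs = foldr (padd A) fs (pzero A a b)"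

definition face where "face Mf n i = Mf (n - 1) n (eps n i)"
definition dgn where "dgn Mf n i = Mf (n + 1) n (eta n i)"

text \<open>b_n for n \<ge> 1 (b_0 = 0 is handled by the convention below).\<close>
definition bmap where
  "bmap A Mo Mf n = psum A (Mo n) (Mo (n - 1)) (map (\<lambda>i. psign A i (face Mf n i)) [0..<Suc n])"

definition dmap where
  "dmap A Mo Mf n = psum A (Mo n) (Mo (Suc n)) (map (\<lambda>i. psign A i (dgn Mf n i)) [0..<Suc (Suc n)])"

text \<open>d_{n-1} b_n : M_n \<rightarrow> M_n, which is 0 for n = 0 (since M_{-1} = 0).\<close>
definition db where
  "db A Mo Mf n = (if n = 0 then pzero A (Mo 0) (Mo 0) else cmp A (dmap A Mo Mf (n - 1)) (bmap A Mo Mf n))"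

definition bd where
  "bd A Mo Mf n = cmp A (bmap A Mo Mf (Suc n)) (dmap A Mo Mf n)"

text \<open>Karoubi operator; the second term vanishes for n = 0 since it factors through M_{-1} = 0.\<close>
definition kappa where
  "kappa A Mo Mf n = psign A n
     (psub A (cmp A (face Mf (Suc n) 0) (dgn Mf n (Suc n)))
             (if n = 0 then pzero A (Mo 0) (Mo 0) else cmp A (dgn Mf (n - 1) n) (face Mf n 0)))"

end

theory Submission
  imports Defs "HOL-Algebra.FiniteProduct"
begin


section \<open>Lambda_+\<close>

lemma per_shift_nat:
  fixes f :: "int \<Rightarrow> int" and P Q :: int
  assumes p: "\<And>j. f (j + P) = f j + Q"
  shows "f (j + P * int k) = f j + Q * int k"
proof (induction k)
  case 0 then show ?case by simp
next
  case (Suc k)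
  have "f (j + P * int (Suc k)) = f ((j + P * int k) + P)" by (simp add: algebra_simps)
  also have "\<dots> = f (j + P * int k) + Q" by (rule p)
  finally show ?case using Suc by (simp add: algebra_simps)
qed

lemma per_shift:
  fixes f :: "int \<Rightarrow> int" and P Q q :: int
  assumes p: "\<And>j. f (j + P) = f j + Q"
  shows "f (j + P * q) = f j + Q * q"
proof (cases "q \<ge> 0")
  case True
  then have "q = int (nat q)" by simp
  then show ?thesis using per_shift_nat[of f P Q, OF p, of j "nat q"] by simp
next
  case False
  define k where "k = nat (- q)"
  have k: "q = - int k" using False k_def by simp
  have e1: "f ((j + P * q) + P * int k) = f (j + P * q) + Q * int k"
    by (rule per_shift_nat[of f P Q, OF p])
  have e2: "(j + P * q) + P * int k = j" using k by (simp add: algebra_simps)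
  show ?thesis using e1 unfolding e2 k by (simp add: algebra_simps)
qed

lemma per_reduce:
  fixes f :: "int \<Rightarrow> int" and P Q :: int
  assumes p: "\<And>j. f (j + P) = f j + Q" and P: "P > 0"
  shows "f j = f (j mod P) + Q * (j div P)"
proof -
  have "f j = f (j mod P + P * (j div P))" by (simp only: mod_mult_div_eq)
  also have "\<dots> = f (j mod P) + Q * (j div P)" by (rule per_shift[of f P Q, OF p])
  finally show ?thesis .
qed

lemma lam_per: "f \<in> lam_hom m n \<Longrightarrow> f (j + (int m + 1)) = f j + (int n + 1)"
  unfolding lam_hom_def by (simp add: add.assoc)

lemma lam_eqI:
  assumes f: "f \<in> lam_hom m n" and g: "g \<in> lam_hom m n"
    and e: "\<And>j. 0 \<le> j \<Longrightarrow> j \<le> int m \<Longrightarrow> f j = g j"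
  shows "f = g"
proof
  fix j
  have P: "int m + 1 > 0" by simp
  have r: "0 \<le> j mod (int m + 1)" "j mod (int m + 1) \<le> int m"
    using P pos_mod_sign pos_mod_bound[OF P, of j] by auto
  show "f j = g j"
    using per_reduce[of f "int m + 1" "int n + 1", OF lam_per[OF f] P, of j]
      per_reduce[of g "int m + 1" "int n + 1", OF lam_per[OF g] P, of j] e[OF r] by simp
qed

lemma per_monoI:
  assumes p: "\<And>j. f (j + (int m + 1)) = f j + (int n + 1)"
    and l: "\<And>k. 0 \<le> k \<Longrightarrow> k \<le> int m \<Longrightarrow> f k \<le> f (k + 1)"
  shows "mono f"
proof -
  have P: "int m + 1 > 0" by simp
  have step: "f k \<le> f (k + 1)" for k
  proof -
    have r: "0 \<le> k mod (int m + 1)" "k mod (int m + 1) \<le> int m"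
      using P pos_mod_sign pos_mod_bound[OF P, of k] by auto
    have "k + 1 = (k mod (int m + 1) + 1) + (int m + 1) * (k div (int m + 1))" by simp
    then have "f (k + 1) = f (k mod (int m + 1) + 1) + (int n + 1) * (k div (int m + 1))"
      using per_shift[of f "int m + 1" "int n + 1", OF p] by metis
    moreover have "f k = f (k mod (int m + 1)) + (int n + 1) * (k div (int m + 1))"
      by (rule per_reduce[of f "int m + 1" "int n + 1", OF p P])
    ultimately show ?thesis using l[OF r] by simp
  qed
  have st: "f x \<le> f (x + int d)" for x d
  proof (induction d)
    case 0 then show ?case by simp
  next
    case (Suc d)
    have e: "x + int (Suc d) = (x + int d) + 1" by simp
    show ?case unfolding e using Suc step[of "x + int d"] by (rule order.trans)
  qed
  show ?thesis
  proof (rule monoI)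
    fix x y :: int assume "x \<le> y"
    then obtain d where "y = x + int d" by (metis le_iff_add zle_iff_zadd)
    then show "f x \<le> f y" using st by simp
  qed
qed

lemma lam_comp: "f \<in> lam_hom m n \<Longrightarrow> g \<in> lam_hom n p \<Longrightarrow> g \<circ> f \<in> lam_hom m p"
  unfolding lam_hom_def
  apply (auto simp: mono_def)
  by (metis order.trans)

lemma lam_id: "id \<in> lam_hom m m"
  unfolding lam_hom_def by (simp add: mono_def)

lemma eps_val:
  assumes "0 \<le> k" "k \<le> int n" "1 \<le> n"
  shows "eps n i k = (if k = int n then int n + 1 + (if i = 0 then 1 else 0)
                      else if k < int i then k else k + 1)"
proof (cases "k = int n")
  case True
  then show ?thesis using assms by (simp add: eps_def Let_def)
next
  case False
  then have "k < int n" using assms by simp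
  then show ?thesis using assms False by (simp add: eps_def Let_def div_pos_pos_trivial mod_pos_pos_trivial)
qed

lemma eta_val:
  assumes "0 \<le> k" "k \<le> int n + 2"
  shows "eta n i k = (if k = int n + 2 then int n + 1 else if k \<le> int i then k else k - 1)"
proof (cases "k = int n + 2")
  case True
  then show ?thesis using assms by (simp add: eta_def Let_def)
next
  case False
  then have "k < int n + 2" using assms by simp
  then show ?thesis using assms False by (simp add: eta_def Let_def div_pos_pos_trivial mod_pos_pos_trivial)
qed

lemma eps_per: "eps (Suc m) i (j + (int m + 1)) = eps (Suc m) i j + (int (Suc m) + 1)"
proof -
  have e: "j + (int m + 1) = j + int (Suc m)" by simp
  have d: "(j + int (Suc m)) div int (Suc m) = j div int (Suc m) + 1" by (rule div_add_self2) simp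
  have md: "(j + int (Suc m)) mod int (Suc m) = j mod int (Suc m)" by (rule mod_add_self2)
  show ?thesis unfolding e eps_def Let_def d md
    by (simp add: algebra_simps)
qed

lemma eta_per: "eta n i (j + (int (Suc n) + 1)) = eta n i j + (int n + 1)"
proof -
  have e: "j + (int (Suc n) + 1) = j + (int n + 2)" by simp
  have d: "(j + (int n + 2)) div (int n + 2) = j div (int n + 2) + 1" by (rule div_add_self2) simp
  have md: "(j + (int n + 2)) mod (int n + 2) = j mod (int n + 2)" by (rule mod_add_self2)
  show ?thesis unfolding e unfolding eta_def Let_def d md
    by (simp add: algebra_simps)
qed

lemma eps_in: "eps (Suc m) i \<in> lam_hom m (Suc m)"
  unfolding lam_hom_def
proof (intro CollectI conjI allI)
  show "mono (eps (Suc m) i)"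
  proof (rule per_monoI[of _ m "Suc m"])
    show "eps (Suc m) i (j + (int m + 1)) = eps (Suc m) i j + (int (Suc m) + 1)" for j by (rule eps_per)
    fix k :: int assume k: "0 \<le> k" "k \<le> int m"
    have a: "eps (Suc m) i k = (if k = int (Suc m) then int (Suc m) + 1 + (if i = 0 then 1 else 0)
                      else if k < int i then k else k + 1)" by (rule eps_val) (use k in auto)
    have b: "eps (Suc m) i (k+1) = (if k+1 = int (Suc m) then int (Suc m) + 1 + (if i = 0 then 1 else 0)
                      else if k+1 < int i then k+1 else k + 1 + 1)" by (rule eps_val) (use k in auto)
    show "eps (Suc m) i k \<le> eps (Suc m) i (k + 1)" unfolding a b using k by auto
  qed
  show "eps (Suc m) i (j + int m + 1) = eps (Suc m) i j + int (Suc m) + 1" for j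
    using eps_per[of m i j] by (simp add: add.assoc)
  show "eps (Suc m) i 0 \<ge> 0" by (simp add: eps_def)
qed

lemma eta_in: "eta n i \<in> lam_hom (Suc n) n"
  unfolding lam_hom_def
proof (intro CollectI conjI allI)
  show "mono (eta n i)"
  proof (rule per_monoI[of _ "Suc n" n])
    show "eta n i (j + (int (Suc n) + 1)) = eta n i j + (int n + 1)" for j by (rule eta_per)
    fix k :: int assume k: "0 \<le> k" "k \<le> int (Suc n)"
    have a: "eta n i k = (if k = int n + 2 then int n + 1 else if k \<le> int i then k else k - 1)"
      by (rule eta_val) (use k in auto)
    have b: "eta n i (k+1) = (if k+1 = int n + 2 then int n + 1 else if k+1 \<le> int i then k+1 else k+1 - 1)"
      by (rule eta_val) (use k in auto)
    show "eta n i k \<le> eta n i (k + 1)" unfolding a b using k by auto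
  qed
  show "eta n i (j + int (Suc n) + 1) = eta n i j + int n + 1" for j
    using eta_per[of n i j] by (simp add: add.assoc)
  show "eta n i 0 \<ge> 0" by (simp add: eta_def)
qed




lemma I1: "j \<le> Suc n \<Longrightarrow> eta n j \<circ> eps (Suc n) j = id"
  apply (rule lam_eqI[OF lam_comp[OF eps_in eta_in] lam_id])
  subgoal for x by (cases "x < int j"; simp add: eps_val eta_val)
  done

lemma I2: "j \<le> n \<Longrightarrow> eta n j \<circ> eps (Suc n) (Suc j) = id"
  apply (rule lam_eqI[OF lam_comp[OF eps_in eta_in] lam_id])
  subgoal for x by (cases "x < int j"; cases "x = int j"; simp add: eps_val eta_val)
  done

lemma I3: "l \<le> k \<Longrightarrow> k \<le> Suc m \<Longrightarrow> (k, l) \<noteq> (Suc m, 0) \<Longrightarrow>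
  eta (Suc m) (Suc k) \<circ> eps (Suc (Suc m)) l = eps (Suc m) l \<circ> eta m k"
  apply (rule lam_eqI[OF lam_comp[OF eps_in eta_in] lam_comp[OF eta_in eps_in]])
  subgoal for x by (cases "x < int l"; cases "x \<le> int k"; cases "x = int (Suc m)"; simp add: eps_val eta_val)
  done

lemma I4: "k < l \<Longrightarrow> l \<le> Suc m \<Longrightarrow>
  eta (Suc m) k \<circ> eps (Suc (Suc m)) (Suc l) = eps (Suc m) l \<circ> eta m k"
  apply (rule lam_eqI[OF lam_comp[OF eps_in eta_in] lam_comp[OF eta_in eps_in]])
  subgoal for x by (cases "x \<le> int l"; cases "x \<le> int k"; cases "x = int (Suc m)"; simp add: eps_val eta_val)
  done

lemma Idd: "i \<le> j \<Longrightarrow> j \<le> Suc m \<Longrightarrow>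
  eta m j \<circ> eta (Suc m) i = eta m i \<circ> eta (Suc m) (Suc j)"
  apply (rule lam_eqI[OF lam_comp[OF eta_in eta_in] lam_comp[OF eta_in eta_in]])
  subgoal for x by (cases "x \<le> int i"; cases "x \<le> int (Suc j)"; cases "x = int (Suc (Suc m))"; simp add: eps_val eta_val)
  done

lemma Ibb: "i \<le> j \<Longrightarrow> j \<le> Suc m \<Longrightarrow>
  eps (Suc (Suc m)) (Suc j) \<circ> eps (Suc m) i = eps (Suc (Suc m)) i \<circ> eps (Suc m) j"
  apply (rule lam_eqI[OF lam_comp[OF eps_in eps_in] lam_comp[OF eps_in eps_in]])
  subgoal for x by (cases "x < int i"; cases "x < int j"; simp add: eps_val eta_val)
  done



definition GG :: "('o, 'm, 'x) preadd_cat_scheme \<Rightarrow> 'o \<Rightarrow> 'o \<Rightarrow> 'm monoid" where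
  "GG A a b = \<lparr>carrier = Defs.hom A a b, mult = padd A, one = pzero A a b\<rparr>"

lemma GG_simps [simp]: "carrier (GG A a b) = Defs.hom A a b" "mult (GG A a b) = padd A"
  "one (GG A a b) = pzero A a b"
  by (simp_all add: GG_def)

locale pa =
  fixes A :: "('o, 'm, 'x) preadd_cat_scheme"
  assumes pa: "preadditive A"
begin

abbreviation H where "H \<equiv> Defs.hom A"

lemmas P = pa[unfolded preadditive_def]
lemmas Q1 = conjunct1[OF P]
lemmas Q2 = conjunct1[OF conjunct2[OF P]]
lemmas Q3 = conjunct1[OF conjunct2[OF conjunct2[OF P]]]
lemmas Q4 = conjunct1[OF conjunct2[OF conjunct2[OF conjunct2[OF P]]]]
lemmas Q5 = conjunct1[OF conjunct2[OF conjunct2[OF conjunct2[OF conjunct2[OF P]]]]]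
lemmas Q6 = conjunct1[OF conjunct2[OF conjunct2[OF conjunct2[OF conjunct2[OF conjunct2[OF P]]]]]]
lemmas Q7 = conjunct1[OF conjunct2[OF conjunct2[OF conjunct2[OF conjunct2[OF conjunct2[OF conjunct2[OF P]]]]]]]
lemmas Q8 = conjunct1[OF conjunct2[OF conjunct2[OF conjunct2[OF conjunct2[OF conjunct2[OF conjunct2[OF conjunct2[OF P]]]]]]]]
lemmas Q9 = conjunct1[OF conjunct2[OF conjunct2[OF conjunct2[OF conjunct2[OF conjunct2[OF conjunct2[OF conjunct2[OF conjunct2[OF P]]]]]]]]]
lemmas Q10 = conjunct1[OF conjunct2[OF conjunct2[OF conjunct2[OF conjunct2[OF conjunct2[OF conjunct2[OF conjunct2[OF conjunct2[OF conjunct2[OF P]]]]]]]]]]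
lemmas Q11 = conjunct1[OF conjunct2[OF conjunct2[OF conjunct2[OF conjunct2[OF conjunct2[OF conjunct2[OF conjunct2[OF conjunct2[OF conjunct2[OF conjunct2[OF P]]]]]]]]]]]
lemmas Q12 = conjunct1[OF conjunct2[OF conjunct2[OF conjunct2[OF conjunct2[OF conjunct2[OF conjunct2[OF conjunct2[OF conjunct2[OF conjunct2[OF conjunct2[OF conjunct2[OF P]]]]]]]]]]]]
lemmas Q13 = conjunct2[OF conjunct2[OF conjunct2[OF conjunct2[OF conjunct2[OF conjunct2[OF conjunct2[OF conjunct2[OF conjunct2[OF conjunct2[OF conjunct2[OF conjunct2[OF P]]]]]]]]]]]]

lemma idh[simp]: "idm A a \<in> H a a" using Q1 by blast
lemma cmph[simp]: "f \<in> H a b \<Longrightarrow> g \<in> H b c \<Longrightarrow> cmp A g f \<in> H a c"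
  using Q2 by blast
lemma cassoc: "f \<in> H a b \<Longrightarrow> g \<in> H b c \<Longrightarrow> h \<in> H c d \<Longrightarrow>
          cmp A h (cmp A g f) = cmp A (cmp A h g) f"
  using Q3 by blast
lemma cid[simp]: "f \<in> H a b \<Longrightarrow> cmp A f (idm A a) = f" "f \<in> H a b \<Longrightarrow> cmp A (idm A b) f = f"
  using Q4 by blast+
lemma zh[simp]: "pzero A a b \<in> H a b" using Q5 by blast
lemma addh[simp]: "f \<in> H a b \<Longrightarrow> g \<in> H a b \<Longrightarrow> padd A f g \<in> H a b"
  using Q6 by blast
lemma negh[simp]: "f \<in> H a b \<Longrightarrow> pneg A f \<in> H a b"
  using Q7 by blast
lemma aassoc: "f \<in> H a b \<Longrightarrow> g \<in> H a b \<Longrightarrow> h \<in> H a b \<Longrightarrow>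
          padd A (padd A f g) h = padd A f (padd A g h)"
  using Q8 by blast
lemma acomm: "f \<in> H a b \<Longrightarrow> g \<in> H a b \<Longrightarrow> padd A f g = padd A g f"
  using Q9 by blast
lemma azero[simp]: "f \<in> H a b \<Longrightarrow> padd A f (pzero A a b) = f"
  using Q10 by blast
lemma aneg[simp]: "f \<in> H a b \<Longrightarrow> padd A f (pneg A f) = pzero A a b"
  using Q11 by blast
lemma distl: "f \<in> H a b \<Longrightarrow> g \<in> H b c \<Longrightarrow> g' \<in> H b c \<Longrightarrow>
          cmp A (padd A g g') f = padd A (cmp A g f) (cmp A g' f)"
  using Q12 by blast
lemma distr: "f \<in> H a b \<Longrightarrow> f' \<in> H a b \<Longrightarrow> g \<in> H b c \<Longrightarrow>
          cmp A g (padd A f f') = padd A (cmp A g f) (cmp A g f')"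
  using Q13 by blast

lemma grp: "comm_group (GG A a b)"
  apply (rule comm_groupI)
  apply (auto simp: aassoc acomm)
  subgoal for x using acomm[of x a b "pzero A a b"] by simp
  subgoal for x using acomm[of x a b "pneg A x"] by (intro bexI[of _ "pneg A x"]) auto
  done

lemma azero2[simp]: "f \<in> H a b \<Longrightarrow> padd A (pzero A a b) f = f"
  by (metis acomm azero zh)

lemma neg_unique: "f \<in> H a b \<Longrightarrow> g \<in> H a b \<Longrightarrow> padd A f g = pzero A a b \<Longrightarrow> pneg A f = g"
proof -
  assume h: "f \<in> H a b" "g \<in> H a b" "padd A f g = pzero A a b"
  have "pneg A f = padd A (pneg A f) (pzero A a b)" using h by simp
  also have "\<dots> = padd A (pneg A f) (padd A f g)" using h by simp
  also have "\<dots> = padd A (padd A (pneg A f) f) g" using h by (simp only: aassoc[OF negh[OF h(1)] h(1) h(2)])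
  also have "\<dots> = padd A (padd A f (pneg A f)) g" using h acomm[of f a b "pneg A f"] by simp
  also have "\<dots> = g" using h by simp
  finally show ?thesis .
qed

lemma negneg[simp]: "f \<in> H a b \<Longrightarrow> pneg A (pneg A f) = f"
  by (metis acomm aneg neg_unique negh)

lemma neg_inv: "f \<in> H a b \<Longrightarrow> pneg A f = inv\<^bsub>GG A a b\<^esub> f"
proof -
  assume f: "f \<in> H a b"
  interpret G: comm_group "GG A a b" by (rule grp)
  have "padd A (pneg A f) f = pzero A a b" using f acomm[of "pneg A f" a b f] by simp
  then show ?thesis using G.inv_equality[of "pneg A f" f] f by simp
qed

lemma neg_add: "f \<in> H a b \<Longrightarrow> g \<in> H a b \<Longrightarrow> pneg A (padd A f g) = padd A (pneg A f) (pneg A g)"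
proof -
  assume h: "f \<in> H a b" "g \<in> H a b"
  interpret G: comm_group "GG A a b" by (rule grp)
  show ?thesis using G.inv_mult[of f g] h by (simp add: neg_inv[of _ a b])
qed

lemma idem_zero: "x \<in> H a b \<Longrightarrow> padd A x x = x \<Longrightarrow> x = pzero A a b"
proof -
  assume h: "x \<in> H a b" "padd A x x = x"
  have "pzero A a b = padd A x (pneg A x)" using h by simp
  also have "\<dots> = padd A (padd A x x) (pneg A x)" using h by simp
  also have "\<dots> = padd A x (padd A x (pneg A x))" by (simp only: aassoc[OF h(1) h(1) negh[OF h(1)]])
  also have "\<dots> = x" using h by simp
  finally show ?thesis by (rule sym)
qed

lemma cmp_zero1[simp]: "f \<in> H a b \<Longrightarrow> cmp A (pzero A b c) f = pzero A a c"
proof -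
  assume f: "f \<in> H a b"
  have z: "padd A (pzero A b c) (pzero A b c) = pzero A b c" by (rule azero[OF zh])
  have "padd A (cmp A (pzero A b c) f) (cmp A (pzero A b c) f) = cmp A (padd A (pzero A b c) (pzero A b c)) f"
    using f by (simp only: distl[OF f zh zh])
  also have "\<dots> = cmp A (pzero A b c) f" by (simp only: z)
  finally show ?thesis using f by (intro idem_zero) (auto intro: cmph[OF zh] cmph[OF _ zh])
qed

lemma cmp_zero2[simp]: "g \<in> H b c \<Longrightarrow> cmp A g (pzero A a b) = pzero A a c"
proof -
  assume f: "g \<in> H b c"
  have z: "padd A (pzero A a b) (pzero A a b) = pzero A a b" by (rule azero[OF zh])
  have "padd A (cmp A g (pzero A a b)) (cmp A g (pzero A a b)) = cmp A g (padd A (pzero A a b) (pzero A a b))"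
    using f by (simp only: distr[OF zh zh f])
  also have "\<dots> = cmp A g (pzero A a b)" by (simp only: z)
  finally show ?thesis using f by (intro idem_zero) (auto intro: cmph[OF zh] cmph[OF _ zh])
qed

lemma cmp_neg1: "f \<in> H a b \<Longrightarrow> g \<in> H b c \<Longrightarrow> cmp A (pneg A g) f = pneg A (cmp A g f)"
  by (rule sym, rule neg_unique[of _ a c]) (auto simp: distl[symmetric] intro: cmph[OF _ negh])

lemma cmp_neg2: "f \<in> H a b \<Longrightarrow> g \<in> H b c \<Longrightarrow> cmp A g (pneg A f) = pneg A (cmp A g f)"
  by (rule sym, rule neg_unique[of _ a c]) (auto simp: distr[symmetric] intro: cmph[OF negh])

lemma psignh[simp]: "f \<in> H a b \<Longrightarrow> psign A i f \<in> H a b"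
  by (simp add: psign_def)

lemma cmp_sign: "f \<in> H a b \<Longrightarrow> g \<in> H b c \<Longrightarrow>
   cmp A (psign A i g) (psign A j f) = psign A (i+j) (cmp A g f)"
proof -
  assume h: "f \<in> H a b" "g \<in> H b c"
  have c: "cmp A g f \<in> H a c" using h by (rule cmph)
  have n1: "cmp A (pneg A g) f = pneg A (cmp A g f)" by (rule cmp_neg1[OF h])
  have n2: "cmp A g (pneg A f) = pneg A (cmp A g f)" by (rule cmp_neg2[OF h])
  have n3: "cmp A (pneg A g) (pneg A f) = cmp A g f"
    using cmp_neg1[OF negh[OF h(1)] h(2)] n2 c by simp
  show ?thesis using h c n1 n2 n3 by (auto simp: psign_def)
qed

lemma sign_suc: "f \<in> H a b \<Longrightarrow> psign A (Suc i) f = pneg A (psign A i f)"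
  by (auto simp: psign_def)


abbreviation Sm where "Sm a b f I \<equiv> finprod (GG A a b) f I"

lemma Sm_closed: "(\<And>i. i \<in> I \<Longrightarrow> f i \<in> H a b) \<Longrightarrow> Sm a b f I \<in> H a b"
proof -
  assume h: "\<And>i. i \<in> I \<Longrightarrow> f i \<in> H a b"
  interpret G: comm_group "GG A a b" by (rule grp)
  show ?thesis using G.finprod_closed[of f I] h by auto
qed

lemma Sm_empty[simp]: "Sm a b f {} = pzero A a b"
proof -
  interpret G: comm_group "GG A a b" by (rule grp)
  show ?thesis by simp
qed

lemma foldr_h: "set xs \<subseteq> H a b \<Longrightarrow> z \<in> H a b \<Longrightarrow> foldr (padd A) xs z \<in> H a b"
  by (induction xs) simp_all

lemma foldr_shift: "set xs \<subseteq> H a b \<Longrightarrow> z \<in> H a b \<Longrightarrow>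
   foldr (padd A) xs z = padd A (foldr (padd A) xs (pzero A a b)) z"
proof (induction xs)
  case Nil then show ?case by simp
next
  case (Cons x xs)
  have x: "x \<in> H a b" and xs: "set xs \<subseteq> H a b" using Cons(2) by simp_all
  have c: "foldr (padd A) xs (pzero A a b) \<in> H a b" using xs by (rule foldr_h) simp
  have "foldr (padd A) (x # xs) z = padd A x (foldr (padd A) xs z)" by simp
  also have "\<dots> = padd A x (padd A (foldr (padd A) xs (pzero A a b)) z)" using Cons(1)[OF xs Cons(3)] by simp
  also have "\<dots> = padd A (padd A x (foldr (padd A) xs (pzero A a b))) z"
    by (rule aassoc[OF x c Cons(3), symmetric])
  finally show ?case by simp
qed

lemma psum_Sm: "(\<And>i. i < k \<Longrightarrow> f i \<in> H a b) \<Longrightarrow> psum A a b (map f [0..<k]) = Sm a b f {0..<k}"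
proof (induction k)
  case 0 then show ?case by (simp add: psum_def)
next
  case (Suc k)
  interpret G: comm_group "GG A a b" by (rule grp)
  have fs: "\<And>i. i \<in> {0..<k} \<Longrightarrow> f i \<in> H a b" using Suc(2) by simp
  have fs': "\<And>i. i < k \<Longrightarrow> f i \<in> H a b" using Suc(2) by simp
  have s: "set (map f [0..<k]) \<subseteq> H a b" using fs by auto
  have fk: "f k \<in> H a b" using Suc(2) by simp
  have cl: "Sm a b f {0..<k} \<in> H a b" by (rule Sm_closed) (rule fs)
  have ih: "psum A a b (map f [0..<k]) = Sm a b f {0..<k}" by (rule Suc(1)) (rule fs')
  have "psum A a b (map f [0..<Suc k]) = foldr (padd A) (map f [0..<k]) (padd A (f k) (pzero A a b))"
    by (simp add: psum_def)
  also have "\<dots> = foldr (padd A) (map f [0..<k]) (f k)" using fk by simp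
  also have "\<dots> = padd A (psum A a b (map f [0..<k])) (f k)"
    unfolding psum_def by (rule foldr_shift[OF s fk])
  also have "\<dots> = padd A (Sm a b f {0..<k}) (f k)" by (simp only: ih)
  also have "\<dots> = padd A (f k) (Sm a b f {0..<k})"
    by (rule acomm[OF cl fk])
  also have "\<dots> = Sm a b f (insert k {0..<k})"
    using G.finprod_insert[of "{0..<k}" k f] fs fk by (simp add: Pi_def)
  also have "insert k {0..<k} = {0..<Suc k}" by auto
  finally show ?case .
qed

lemma Sm_insert: "finite I \<Longrightarrow> x \<notin> I \<Longrightarrow> (\<And>i. i \<in> insert x I \<Longrightarrow> f i \<in> H a b) \<Longrightarrow>
   Sm a b f (insert x I) = padd A (f x) (Sm a b f I)"
proof -
  assume h: "finite I" "x \<notin> I" "\<And>i. i \<in> insert x I \<Longrightarrow> f i \<in> H a b"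
  interpret G: comm_group "GG A a b" by (rule grp)
  show ?thesis using G.finprod_insert[of I x f] h by (auto simp: Pi_def)
qed

lemma Sm_single: "f x \<in> H a b \<Longrightarrow> Sm a b f {x} = f x"
  using Sm_insert[of "{}" x f a b] by auto

lemma Sm_Un: "finite I \<Longrightarrow> finite J \<Longrightarrow> I \<inter> J = {} \<Longrightarrow> (\<And>i. i \<in> I \<union> J \<Longrightarrow> f i \<in> H a b) \<Longrightarrow>
   Sm a b f (I \<union> J) = padd A (Sm a b f I) (Sm a b f J)"
proof -
  assume h: "finite I" "finite J" "I \<inter> J = {}" "\<And>i. i \<in> I \<union> J \<Longrightarrow> f i \<in> H a b"
  interpret G: comm_group "GG A a b" by (rule grp)
  show ?thesis using G.finprod_Un_disjoint[of I J f] h by (auto simp: Pi_def)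
qed

lemma Sm_reindex: "inj_on p I \<Longrightarrow> (\<And>i. i \<in> I \<Longrightarrow> f (p i) \<in> H a b) \<Longrightarrow>
   Sm a b f (p ` I) = Sm a b (\<lambda>i. f (p i)) I"
proof -
  assume h: "inj_on p I" "\<And>i. i \<in> I \<Longrightarrow> f (p i) \<in> H a b"
  interpret G: comm_group "GG A a b" by (rule grp)
  show ?thesis using G.finprod_reindex[of f p I] h by (auto simp: Pi_def)
qed

lemma Sm_add: "(\<And>i. i \<in> I \<Longrightarrow> f i \<in> H a b) \<Longrightarrow> (\<And>i. i \<in> I \<Longrightarrow> g i \<in> H a b) \<Longrightarrow>
   Sm a b (\<lambda>i. padd A (f i) (g i)) I = padd A (Sm a b f I) (Sm a b g I)"
proof -
  assume h: "\<And>i. i \<in> I \<Longrightarrow> f i \<in> H a b" "\<And>i. i \<in> I \<Longrightarrow> g i \<in> H a b"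
  interpret G: comm_group "GG A a b" by (rule grp)
  show ?thesis using G.finprod_multf[of f I g] h by (auto simp: Pi_def)
qed

lemma Sm_cong: "I = J \<Longrightarrow> (\<And>i. i \<in> J \<Longrightarrow> f i = g i) \<Longrightarrow> (\<And>i. i \<in> J \<Longrightarrow> g i \<in> H a b) \<Longrightarrow>
   Sm a b f I = Sm a b g J"
proof -
  assume h: "I = J" "\<And>i. i \<in> J \<Longrightarrow> f i = g i" "\<And>i. i \<in> J \<Longrightarrow> g i \<in> H a b"
  interpret G: comm_group "GG A a b" by (rule grp)
  show ?thesis using G.finprod_cong'[of I J g f] h by (auto simp: Pi_def)
qed

lemma Sm_zero: "(\<And>i. i \<in> I \<Longrightarrow> f i = pzero A a b) \<Longrightarrow> Sm a b f I = pzero A a b"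
proof -
  assume h: "\<And>i. i \<in> I \<Longrightarrow> f i = pzero A a b"
  interpret G: comm_group "GG A a b" by (rule grp)
  show ?thesis using G.finprod_one_eqI[of I f] h by auto
qed

lemma Sm_cmpL: "finite I \<Longrightarrow> g \<in> H b c \<Longrightarrow> (\<And>i. i \<in> I \<Longrightarrow> f i \<in> H a b) \<Longrightarrow>
   cmp A g (Sm a b f I) = Sm a c (\<lambda>i. cmp A g (f i)) I"
proof (induction I rule: finite_induct)
  case empty then show ?case by simp
next
  case (insert x F)
  have c1: "Sm a b f F \<in> H a b" using insert by (auto intro: Sm_closed)
  have "cmp A g (Sm a b f (insert x F)) = cmp A g (padd A (f x) (Sm a b f F))"
    using insert by (subst Sm_insert) auto
  also have "\<dots> = padd A (cmp A g (f x)) (cmp A g (Sm a b f F))"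
    using insert c1 distr[of "f x" a b "Sm a b f F" g c] by simp
  also have "\<dots> = padd A (cmp A g (f x)) (Sm a c (\<lambda>i. cmp A g (f i)) F)"
    using insert by simp
  also have "\<dots> = Sm a c (\<lambda>i. cmp A g (f i)) (insert x F)"
    using insert by (subst Sm_insert) (auto intro: cmph[where b=b])
  finally show ?case .
qed

lemma Sm_cmpR: "finite I \<Longrightarrow> g \<in> H a b \<Longrightarrow> (\<And>i. i \<in> I \<Longrightarrow> f i \<in> H b c) \<Longrightarrow>
   cmp A (Sm b c f I) g = Sm a c (\<lambda>i. cmp A (f i) g) I"
proof (induction I rule: finite_induct)
  case empty then show ?case by simp
next
  case (insert x F)
  have c1: "Sm b c f F \<in> H b c" using insert by (auto intro: Sm_closed)
  have "cmp A (Sm b c f (insert x F)) g = cmp A (padd A (f x) (Sm b c f F)) g"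
    using insert by (subst Sm_insert) auto
  also have "\<dots> = padd A (cmp A (f x) g) (cmp A (Sm b c f F) g)"
    using insert c1 distl[of g a b "f x" c "Sm b c f F"] by simp
  also have "\<dots> = padd A (cmp A (f x) g) (Sm a c (\<lambda>i. cmp A (f i) g) F)"
    using insert by simp
  also have "\<dots> = Sm a c (\<lambda>i. cmp A (f i) g) (insert x F)"
    using insert by (subst Sm_insert) (auto intro: cmph[where b=b])
  finally show ?case .
qed

lemma Sm_Sigma: "finite I \<Longrightarrow> finite J \<Longrightarrow> (\<And>i j. i \<in> I \<Longrightarrow> j \<in> J \<Longrightarrow> h i j \<in> H a b) \<Longrightarrow>
   Sm a b (\<lambda>i. Sm a b (h i) J) I = Sm a b (\<lambda>(i, j). h i j) (I \<times> J)"
proof (induction I rule: finite_induct)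
  case empty then show ?case by simp
next
  case (insert x F)
  have e: "insert x F \<times> J = Pair x ` J \<union> F \<times> J" by auto
  have "Sm a b (\<lambda>i. Sm a b (h i) J) (insert x F) = padd A (Sm a b (h x) J) (Sm a b (\<lambda>i. Sm a b (h i) J) F)"
    using insert by (subst Sm_insert) (auto intro: Sm_closed)
  also have "\<dots> = padd A (Sm a b (\<lambda>(i, j). h i j) (Pair x ` J)) (Sm a b (\<lambda>(i, j). h i j) (F \<times> J))"
    using insert by (subst Sm_reindex) (auto simp: inj_on_def)
  also have "\<dots> = Sm a b (\<lambda>(i, j). h i j) (insert x F \<times> J)"
    unfolding e using insert by (subst Sm_Un) auto
  finally show ?case .
qed

lemma Sm_prod: "finite I \<Longrightarrow> finite J \<Longrightarrow> (\<And>i. i \<in> I \<Longrightarrow> f i \<in> H b c) \<Longrightarrow> (\<And>j. j \<in> J \<Longrightarrow> g j \<in> H a b) \<Longrightarrow>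
  cmp A (Sm b c f I) (Sm a b g J) = Sm a c (\<lambda>(i, j). cmp A (f i) (g j)) (I \<times> J)"
proof -
  assume h: "finite I" "finite J" "\<And>i. i \<in> I \<Longrightarrow> f i \<in> H b c" "\<And>j. j \<in> J \<Longrightarrow> g j \<in> H a b"
  have "cmp A (Sm b c f I) (Sm a b g J) = Sm a c (\<lambda>i. cmp A (f i) (Sm a b g J)) I"
    using h by (intro Sm_cmpR) (auto intro: Sm_closed)
  also have "\<dots> = Sm a c (\<lambda>i. Sm a c (\<lambda>j. cmp A (f i) (g j)) J) I"
    using h by (intro Sm_cong Sm_cmpL Sm_closed cmph[where b=b]) auto
  also have "\<dots> = Sm a c (\<lambda>(i, j). cmp A (f i) (g j)) (I \<times> J)"
    using h by (intro Sm_Sigma cmph[where b=b]) auto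
  finally show ?thesis .
qed

lemma Sm_cancel:
  assumes T: "finite T" "inj_on p T" "inj_on q T" "p ` T \<inter> q ` T = {}"
    and e: "\<And>t. t \<in> T \<Longrightarrow> h (p t) = pneg A (h (q t))"
    and hq: "\<And>t. t \<in> T \<Longrightarrow> h (q t) \<in> H a b"
  shows "Sm a b h (p ` T \<union> q ` T) = pzero A a b"
proof -
  have hp: "\<And>t. t \<in> T \<Longrightarrow> h (p t) \<in> H a b" using e hq by simp
  have "Sm a b h (p ` T \<union> q ` T) = padd A (Sm a b h (p ` T)) (Sm a b h (q ` T))"
    using T hp hq by (intro Sm_Un) auto
  also have "\<dots> = padd A (Sm a b (\<lambda>t. h (p t)) T) (Sm a b (\<lambda>t. h (q t)) T)"
    using T hp hq by (simp add: Sm_reindex)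
  also have "\<dots> = Sm a b (\<lambda>t. padd A (h (p t)) (h (q t))) T"
    using hp hq by (simp add: Sm_add)
  also have "\<dots> = pzero A a b"
    using e hq by (intro Sm_zero) (metis aneg acomm negh)
  finally show ?thesis .
qed


lemma neg_zero[simp]: "pneg A (pzero A a b) = pzero A a b"
  by (rule neg_unique) simp_all

lemma negl: "f \<in> H a b \<Longrightarrow> padd A (pneg A f) f = pzero A a b"
  using acomm[of "pneg A f" a b f] by simp

lemma ac6:
  assumes h: "I \<in> H a b" "x0 \<in> H a b" "y0 \<in> H a b" "SU \<in> H a b" "SL \<in> H a b" "YU \<in> H a b" "YL \<in> H a b"
    and z: "padd A SU YU = pzero A a b" "padd A SL YL = pzero A a b"
  shows "padd A (padd A I (padd A x0 (padd A SU SL))) (padd A y0 (padd A YU YL)) = padd A I (padd A x0 y0)"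
proof -
  interpret G: comm_group "GG A a b" by (rule grp)
  note AC = G.m_ac[unfolded GG_simps]
  have "padd A (padd A I (padd A x0 (padd A SU SL))) (padd A y0 (padd A YU YL)) =
     padd A (padd A I (padd A x0 y0)) (padd A (padd A SU YU) (padd A SL YL))"
    using h by (simp add: AC)
  also have "\<dots> = padd A I (padd A x0 y0)" using h z by simp
  finally show ?thesis .
qed

lemma fin:
  assumes h: "X \<in> H a b" "Y \<in> H a b" "K \<in> H a b" "I \<in> H a b"
    and e: "padd A X Y = padd A I (pneg A K)"
  shows "K = padd A (padd A I (pneg A Y)) (pneg A X)"
proof -
  interpret G: comm_group "GG A a b" by (rule grp)
  note AC = G.m_ac[unfolded GG_simps]
  have "padd A (padd A I (pneg A Y)) (pneg A X) = padd A I (pneg A (padd A X Y))"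
    using h by (simp add: neg_add AC)
  also have "\<dots> = padd A I (pneg A (padd A I (pneg A K)))" by (simp only: e)
  also have "\<dots> = padd A I (padd A (pneg A I) K)"
    using h by (simp add: neg_add[OF h(4) negh[OF h(3)]])
  also have "\<dots> = padd A (padd A I (pneg A I)) K"
    by (rule aassoc[OF h(4) negh[OF h(4)] h(3), symmetric])
  also have "\<dots> = K" using h by simp
  finally show ?thesis by (rule sym)
qed

lemma expand:
  assumes h: "X \<in> H a a" "Y \<in> H a a" and z: "cmp A X Y = pzero A a a"
  shows "cmp A (psub A (idm A a) X) (psub A (idm A a) Y) = padd A (padd A (idm A a) (pneg A Y)) (pneg A X)"
proof -
  let ?W = "padd A (idm A a) (pneg A Y)"
  have W: "?W \<in> H a a" using h by simp
  have c: "cmp A X ?W = X"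
  proof -
    have "cmp A X ?W = padd A (cmp A X (idm A a)) (cmp A X (pneg A Y))"
      by (rule distr[where a=a and b=a and c=a]) (use h in simp_all)
    also have "\<dots> = padd A X (pneg A (cmp A X Y))" using h by (simp add: cmp_neg2)
    also have "\<dots> = X" using h z by simp
    finally show ?thesis .
  qed
  have "cmp A (psub A (idm A a) X) (psub A (idm A a) Y) = cmp A (padd A (idm A a) (pneg A X)) ?W"
    by (simp add: psub_def)
  also have "\<dots> = padd A (cmp A (idm A a) ?W) (cmp A (pneg A X) ?W)"
    by (rule distl[where a=a and b=a and c=a]) (use h W in simp_all)
  also have "\<dots> = padd A ?W (pneg A (cmp A X ?W))" using h W by (simp add: cmp_neg1[OF W h(1)] cid(2)[OF W])
  also have "\<dots> = padd A ?W (pneg A X)" by (simp only: c)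
  finally show ?thesis .
qed


lemma psign_add: "f \<in> H a b \<Longrightarrow> g \<in> H a b \<Longrightarrow> psign A n (padd A f g) = padd A (psign A n f) (psign A n g)"
  by (simp add: psign_def neg_add)

lemma psign_neg: "f \<in> H a b \<Longrightarrow> psign A n (pneg A f) = pneg A (psign A n f)"
  by (simp add: psign_def)

end



definition TU :: "nat \<Rightarrow> (nat \<times> nat) set" where
  "TU n = {(k, l). l \<le> k \<and> k \<le> n \<and> (k, l) \<noteq> (n, 0)}"
definition TL :: "nat \<Rightarrow> (nat \<times> nat) set" where
  "TL n = {(k, l). k < l \<and> l \<le> n}"
definition psiU :: "nat \<times> nat \<Rightarrow> nat \<times> nat" where "psiU t = (snd t, Suc (fst t))"
definition psiL :: "nat \<times> nat \<Rightarrow> nat \<times> nat" where "psiL t = (Suc (snd t), fst t)"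

lemma TU_fin: "finite (TU n)"
  unfolding TU_def by (rule finite_subset[of _ "{0..n} \<times> {0..n}"]) auto
lemma TL_fin: "finite (TL n)"
  unfolding TL_def by (rule finite_subset[of _ "{0..n} \<times> {0..n}"]) auto

locale dup = pa A for A :: "('o, 'm, 'x) preadd_cat_scheme" +
  fixes Mo :: "nat \<Rightarrow> 'o" and Mf :: "nat \<Rightarrow> nat \<Rightarrow> (int \<Rightarrow> int) \<Rightarrow> 'm"
  assumes dupl: "duplicial A Mo Mf"
begin

lemmas D = dupl[unfolded duplicial_def]

lemma Mf_h: "f \<in> lam_hom m n \<Longrightarrow> Mf m n f \<in> H (Mo n) (Mo m)"
  using D[THEN conjunct2, THEN conjunct1] by blast

lemma Mf_comp: "f \<in> lam_hom m n \<Longrightarrow> g \<in> lam_hom n p \<Longrightarrow> cmp A (Mf m n f) (Mf n p g) = Mf m p (g \<circ> f)"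
  using D[THEN conjunct2, THEN conjunct2, THEN conjunct2] by simp

lemma Mf_id: "Mf m m id = idm A (Mo m)"
  using D[THEN conjunct2, THEN conjunct2, THEN conjunct1] by blast

lemma face_eq: "face Mf (Suc m) i = Mf m (Suc m) (eps (Suc m) i)"
  by (simp add: face_def)

lemma dgn_eq: "dgn Mf n i = Mf (Suc n) n (eta n i)"
  by (simp add: dgn_def)

lemma face_h: "face Mf (Suc m) i \<in> H (Mo (Suc m)) (Mo m)"
  unfolding face_eq by (rule Mf_h[OF eps_in])

lemma dgn_h: "dgn Mf n i \<in> H (Mo n) (Mo (Suc n))"
  unfolding dgn_def using Mf_h[OF eta_in] by simp

lemma bmap_Sm: "bmap A Mo Mf (Suc m) =
   Sm (Mo (Suc m)) (Mo m) (\<lambda>i. psign A i (face Mf (Suc m) i)) {0..<Suc (Suc m)}"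
  unfolding bmap_def diff_Suc_1 by (rule psum_Sm) (rule psignh, rule face_h)

lemma dmap_Sm: "dmap A Mo Mf n =
   Sm (Mo n) (Mo (Suc n)) (\<lambda>i. psign A i (dgn Mf n i)) {0..<Suc (Suc n)}"
  unfolding dmap_def by (rule psum_Sm) (rule psignh, rule dgn_h)

lemma bmap_h: "bmap A Mo Mf (Suc m) \<in> H (Mo (Suc m)) (Mo m)"
  unfolding bmap_Sm by (rule Sm_closed) (simp add: face_h)

lemma dmap_h: "dmap A Mo Mf n \<in> H (Mo n) (Mo (Suc n))"
  unfolding dmap_Sm by (rule Sm_closed) (simp add: dgn_h)

lemma bd_h: "bd A Mo Mf n \<in> H (Mo n) (Mo n)"
  unfolding bd_def using bmap_h dmap_h by (rule cmph[rotated])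

lemma db_h: "db A Mo Mf n \<in> H (Mo n) (Mo n)"
proof (cases n)
  case 0 then show ?thesis by (simp add: db_def)
next
  case (Suc m)
  then show ?thesis unfolding db_def using bmap_h[of m] dmap_h[of m] by (simp add: cmph)
qed

lemma bd_Sm: "bd A Mo Mf n = Sm (Mo n) (Mo n)
   (\<lambda>(i, j). psign A (i + j) (Mf n n (eta n j \<circ> eps (Suc n) i))) ({0..<Suc (Suc n)} \<times> {0..<Suc (Suc n)})"
proof -
  have "bd A Mo Mf n = Sm (Mo n) (Mo n) (\<lambda>(i, j). cmp A (psign A i (face Mf (Suc n) i)) (psign A j (dgn Mf n j)))
      ({0..<Suc (Suc n)} \<times> {0..<Suc (Suc n)})"
    unfolding bd_def bmap_Sm dmap_Sm by (rule Sm_prod) (auto simp: face_h dgn_h)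
  also have "\<dots> = Sm (Mo n) (Mo n)
   (\<lambda>(i, j). psign A (i + j) (Mf n n (eta n j \<circ> eps (Suc n) i))) ({0..<Suc (Suc n)} \<times> {0..<Suc (Suc n)})"
  proof (rule Sm_cong)
    fix p assume "p \<in> {0..<Suc (Suc n)} \<times> {0..<Suc (Suc n)}"
    obtain i j where p: "p = (i, j)" by (cases p)
    have "cmp A (psign A i (face Mf (Suc n) i)) (psign A j (dgn Mf n j)) = psign A (i + j) (cmp A (face Mf (Suc n) i) (dgn Mf n j))"
      by (rule cmp_sign[OF dgn_h face_h])
    also have "cmp A (face Mf (Suc n) i) (dgn Mf n j) = Mf n n (eta n j \<circ> eps (Suc n) i)"
      unfolding face_eq dgn_eq by (rule Mf_comp[OF eps_in eta_in])
    finally show "(case p of (i, j) \<Rightarrow> cmp A (psign A i (face Mf (Suc n) i)) (psign A j (dgn Mf n j))) =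
         (case p of (i, j) \<Rightarrow> psign A (i + j) (Mf n n (eta n j \<circ> eps (Suc n) i)))" by (simp add: p)
    show "(case p of (i, j) \<Rightarrow> psign A (i + j) (Mf n n (eta n j \<circ> eps (Suc n) i))) \<in> H (Mo n) (Mo n)"
      using Mf_h[OF lam_comp[OF eps_in eta_in]] by (simp add: p)
  qed simp
  finally show ?thesis .
qed

lemma db_Sm: "db A Mo Mf (Suc m) = Sm (Mo (Suc m)) (Mo (Suc m))
   (\<lambda>(k, l). psign A (k + l) (Mf (Suc m) (Suc m) (eps (Suc m) l \<circ> eta m k))) ({0..<Suc (Suc m)} \<times> {0..<Suc (Suc m)})"
proof -
  have "db A Mo Mf (Suc m) = Sm (Mo (Suc m)) (Mo (Suc m)) (\<lambda>(k, l). cmp A (psign A k (dgn Mf m k)) (psign A l (face Mf (Suc m) l)))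
      ({0..<Suc (Suc m)} \<times> {0..<Suc (Suc m)})"
    unfolding db_def bmap_Sm dmap_Sm by simp (rule Sm_prod, auto simp: face_h dgn_h)
  also have "\<dots> = Sm (Mo (Suc m)) (Mo (Suc m))
   (\<lambda>(k, l). psign A (k + l) (Mf (Suc m) (Suc m) (eps (Suc m) l \<circ> eta m k))) ({0..<Suc (Suc m)} \<times> {0..<Suc (Suc m)})"
  proof (rule Sm_cong)
    fix p assume "p \<in> {0..<Suc (Suc m)} \<times> {0..<Suc (Suc m)}"
    obtain k l where p: "p = (k, l)" by (cases p)
    have "cmp A (psign A k (dgn Mf m k)) (psign A l (face Mf (Suc m) l)) = psign A (k + l) (cmp A (dgn Mf m k) (face Mf (Suc m) l))"
      by (rule cmp_sign[OF face_h dgn_h])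
    also have "cmp A (dgn Mf m k) (face Mf (Suc m) l) = Mf (Suc m) (Suc m) (eps (Suc m) l \<circ> eta m k)"
      unfolding face_eq dgn_eq by (rule Mf_comp[OF eta_in eps_in])
    finally show "(case p of (k, l) \<Rightarrow> cmp A (psign A k (dgn Mf m k)) (psign A l (face Mf (Suc m) l))) =
         (case p of (k, l) \<Rightarrow> psign A (k + l) (Mf (Suc m) (Suc m) (eps (Suc m) l \<circ> eta m k)))" by (simp add: p)
    show "(case p of (k, l) \<Rightarrow> psign A (k + l) (Mf (Suc m) (Suc m) (eps (Suc m) l \<circ> eta m k))) \<in> H (Mo (Suc m)) (Mo (Suc m))"
      using Mf_h[OF lam_comp[OF eta_in eps_in]] by (simp add: p)
  qed simp
  finally show ?thesis .
qed


lemma zcomp_h: "f \<in> lam_hom a c \<Longrightarrow> g \<in> lam_hom c b \<Longrightarrow> psign A k (Mf a b (g \<circ> f)) \<in> H (Mo b) (Mo a)"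
  using Mf_h[OF lam_comp] by simp

lemma dd0: "cmp A (dmap A Mo Mf (Suc m)) (dmap A Mo Mf m) = pzero A (Mo m) (Mo (Suc (Suc m)))"
proof -
  let ?z = "\<lambda>(a, b). psign A (a + b) (Mf (Suc (Suc m)) m (eta m b \<circ> eta (Suc m) a))"
  let ?I = "{0..<Suc (Suc (Suc m))} \<times> {0..<Suc (Suc m)}"
  define T where "T = {(i, j). i \<le> j \<and> j \<le> Suc m}"
  let ?q = "\<lambda>(i, j). (Suc j, i)"
  have "cmp A (dmap A Mo Mf (Suc m)) (dmap A Mo Mf m) =
     Sm (Mo m) (Mo (Suc (Suc m))) (\<lambda>(a, b). cmp A (psign A a (dgn Mf (Suc m) a)) (psign A b (dgn Mf m b))) ?I"
    unfolding dmap_Sm by (rule Sm_prod) (auto simp: dgn_h)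
  also have "\<dots> = Sm (Mo m) (Mo (Suc (Suc m))) ?z ?I"
  proof (rule Sm_cong)
    fix p assume "p \<in> ?I"
    obtain a b where p: "p = (a, b)" by (cases p)
    have "cmp A (psign A a (dgn Mf (Suc m) a)) (psign A b (dgn Mf m b)) = psign A (a + b) (cmp A (dgn Mf (Suc m) a) (dgn Mf m b))"
      by (rule cmp_sign[OF dgn_h dgn_h])
    also have "cmp A (dgn Mf (Suc m) a) (dgn Mf m b) = Mf (Suc (Suc m)) m (eta m b \<circ> eta (Suc m) a)"
      unfolding dgn_eq by (rule Mf_comp[OF eta_in eta_in])
    finally show "(case p of (a, b) \<Rightarrow> cmp A (psign A a (dgn Mf (Suc m) a)) (psign A b (dgn Mf m b))) = ?z p"
      by (simp add: p)
    show "?z p \<in> H (Mo m) (Mo (Suc (Suc m)))" unfolding p using zcomp_h[OF eta_in eta_in] by simp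
  qed simp
  also have "?I = (\<lambda>t. t) ` T \<union> ?q ` T"
  proof (intro equalityI subsetI)
    fix p assume "p \<in> ?I"
    then obtain a b where p: "p = (a, b)" and ab: "a < Suc (Suc (Suc m))" "b < Suc (Suc m)" by auto
    show "p \<in> (\<lambda>t. t) ` T \<union> ?q ` T"
    proof (cases "a \<le> b")
      case True then show ?thesis using ab unfolding p T_def by auto
    next
      case False
      then have "(a, b) = ?q (b, a - 1)" by simp
      moreover have "(b, a - 1) \<in> T" using False ab unfolding T_def by auto
      ultimately show ?thesis unfolding p by blast
    qed
  next
    fix p assume "p \<in> (\<lambda>t. t) ` T \<union> ?q ` T"
    then show "p \<in> ?I" unfolding T_def by auto
  qed
  also have "Sm (Mo m) (Mo (Suc (Suc m))) ?z ((\<lambda>t. t) ` T \<union> ?q ` T) = pzero A (Mo m) (Mo (Suc (Suc m)))"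
  proof (rule Sm_cancel)
    show "finite T" unfolding T_def by (rule finite_subset[of _ "{0..Suc m} \<times> {0..Suc m}"]) auto
    show "inj_on (\<lambda>t. t) T" by simp
    show "inj_on ?q T" by (auto simp: inj_on_def)
    show "(\<lambda>t. t) ` T \<inter> ?q ` T = {}" unfolding T_def by auto
    fix t assume t: "t \<in> T"
    obtain i j where tt: "t = (i, j)" by (cases t)
    have ij: "i \<le> j" "j \<le> Suc m" using t unfolding tt T_def by auto
    have M: "Mf (Suc (Suc m)) m (eta m j \<circ> eta (Suc m) i) \<in> H (Mo m) (Mo (Suc (Suc m)))"
      using Mf_h[OF lam_comp[OF eta_in eta_in]] by simp
    show "?z ((\<lambda>t. t) t) = pneg A (?z (?q t))"
      unfolding tt using Idd[OF ij] M negneg[OF psignh[OF M]] sign_suc[OF M] by (simp add: add.commute)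
    show "?z (?q t) \<in> H (Mo m) (Mo (Suc (Suc m)))" unfolding tt using zcomp_h[OF eta_in eta_in] by simp
  qed
  finally show ?thesis .
qed

lemma bb0: "cmp A (bmap A Mo Mf (Suc m)) (bmap A Mo Mf (Suc (Suc m))) = pzero A (Mo (Suc (Suc m))) (Mo m)"
proof -
  let ?z = "\<lambda>(a, b). psign A (a + b) (Mf m (Suc (Suc m)) (eps (Suc (Suc m)) b \<circ> eps (Suc m) a))"
  let ?I = "{0..<Suc (Suc m)} \<times> {0..<Suc (Suc (Suc m))}"
  define T where "T = {(i, j). i \<le> j \<and> j \<le> Suc m}"
  let ?p = "\<lambda>(i, j). (i, Suc j)"
  let ?q = "\<lambda>(i, j). (j, i)"
  have "cmp A (bmap A Mo Mf (Suc m)) (bmap A Mo Mf (Suc (Suc m))) =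
     Sm (Mo (Suc (Suc m))) (Mo m) (\<lambda>(a, b). cmp A (psign A a (face Mf (Suc m) a)) (psign A b (face Mf (Suc (Suc m)) b))) ?I"
    unfolding bmap_Sm by (rule Sm_prod) (auto simp: face_h)
  also have "\<dots> = Sm (Mo (Suc (Suc m))) (Mo m) ?z ?I"
  proof (rule Sm_cong)
    fix p assume "p \<in> ?I"
    obtain a b where p: "p = (a, b)" by (cases p)
    have "cmp A (psign A a (face Mf (Suc m) a)) (psign A b (face Mf (Suc (Suc m)) b)) = psign A (a + b) (cmp A (face Mf (Suc m) a) (face Mf (Suc (Suc m)) b))"
      by (rule cmp_sign[OF face_h face_h])
    also have "cmp A (face Mf (Suc m) a) (face Mf (Suc (Suc m)) b) = Mf m (Suc (Suc m)) (eps (Suc (Suc m)) b \<circ> eps (Suc m) a)"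
      unfolding face_eq by (rule Mf_comp[OF eps_in eps_in])
    finally show "(case p of (a, b) \<Rightarrow> cmp A (psign A a (face Mf (Suc m) a)) (psign A b (face Mf (Suc (Suc m)) b))) = ?z p"
      by (simp add: p)
    show "?z p \<in> H (Mo (Suc (Suc m))) (Mo m)" unfolding p using zcomp_h[OF eps_in eps_in] by simp
  qed simp
  also have "?I = ?p ` T \<union> ?q ` T"
  proof (intro equalityI subsetI)
    fix p assume "p \<in> ?I"
    then obtain a b where p: "p = (a, b)" and ab: "a < Suc (Suc m)" "b < Suc (Suc (Suc m))" by auto
    show "p \<in> ?p ` T \<union> ?q ` T"
    proof (cases "a < b")
      case True
      then have "(a, b) = ?p (a, b - 1)" by simp
      moreover have "(a, b - 1) \<in> T" using True ab unfolding T_def by auto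
      ultimately show ?thesis unfolding p by blast
    next
      case False
      then have "(a, b) = ?q (b, a)" by simp
      moreover have "(b, a) \<in> T" using False ab unfolding T_def by auto
      ultimately show ?thesis unfolding p by blast
    qed
  next
    fix p assume "p \<in> ?p ` T \<union> ?q ` T"
    then show "p \<in> ?I" unfolding T_def by auto
  qed
  also have "Sm (Mo (Suc (Suc m))) (Mo m) ?z (?p ` T \<union> ?q ` T) = pzero A (Mo (Suc (Suc m))) (Mo m)"
  proof (rule Sm_cancel)
    show "finite T" unfolding T_def by (rule finite_subset[of _ "{0..Suc m} \<times> {0..Suc m}"]) auto
    show "inj_on ?p T" by (auto simp: inj_on_def)
    show "inj_on ?q T" by (auto simp: inj_on_def)
    show "?p ` T \<inter> ?q ` T = {}" unfolding T_def by auto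
    fix t assume t: "t \<in> T"
    obtain i j where tt: "t = (i, j)" by (cases t)
    have ij: "i \<le> j" "j \<le> Suc m" using t unfolding tt T_def by auto
    have M: "Mf m (Suc (Suc m)) (eps (Suc (Suc m)) i \<circ> eps (Suc m) j) \<in> H (Mo (Suc (Suc m))) (Mo m)"
      using Mf_h[OF lam_comp[OF eps_in eps_in]] by simp
    show "?z (?p t) = pneg A (?z (?q t))"
      unfolding tt using Ibb[OF ij] M negneg[OF psignh[OF M]] sign_suc[OF M] by (simp add: add.commute)
    show "?z (?q t) \<in> H (Mo (Suc (Suc m))) (Mo m)" unfolding tt using zcomp_h[OF eps_in eps_in] by simp
  qed
  finally show ?thesis .
qed


definition xt :: "nat \<Rightarrow> nat \<times> nat \<Rightarrow> 'm" where
  "xt n t = psign A (fst t + snd t) (Mf n n (eta n (snd t) \<circ> eps (Suc n) (fst t)))"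

definition yt :: "nat \<Rightarrow> nat \<times> nat \<Rightarrow> 'm" where
  "yt m t = psign A (fst t + snd t) (Mf (Suc m) (Suc m) (eps (Suc m) (snd t) \<circ> eta m (fst t)))"

lemma xt_h: "xt n t \<in> H (Mo n) (Mo n)"
  unfolding xt_def by (rule zcomp_h[OF eps_in eta_in])

lemma yt_h: "yt m t \<in> H (Mo (Suc m)) (Mo (Suc m))"
  unfolding yt_def by (rule zcomp_h[OF eta_in eps_in])

lemma bd_Sm': "bd A Mo Mf n = Sm (Mo n) (Mo n) (xt n) ({0..<Suc (Suc n)} \<times> {0..<Suc (Suc n)})"
  unfolding bd_Sm
proof (rule Sm_cong[OF refl])
  fix p :: "nat \<times> nat"
  show "(case p of (i, j) \<Rightarrow> psign A (i + j) (Mf n n (eta n j \<circ> eps (Suc n) i))) = xt n p"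
    by (cases p) (simp add: xt_def)
  show "xt n p \<in> H (Mo n) (Mo n)" by (rule xt_h)
qed

lemma db_Sm': "db A Mo Mf (Suc m) = Sm (Mo (Suc m)) (Mo (Suc m)) (yt m) ({0..<Suc (Suc m)} \<times> {0..<Suc (Suc m)})"
  unfolding db_Sm
proof (rule Sm_cong[OF refl])
  fix p :: "nat \<times> nat"
  show "(case p of (k, l) \<Rightarrow> psign A (k + l) (Mf (Suc m) (Suc m) (eps (Suc m) l \<circ> eta m k))) = yt m p"
    by (cases p) (simp add: yt_def)
  show "yt m p \<in> H (Mo (Suc m)) (Mo (Suc m))" by (rule yt_h)
qed

lemma bd_dec: "bd A Mo Mf n = padd A (idm A (Mo n)) (padd A (xt n (0, Suc n))
    (padd A (Sm (Mo n) (Mo n) (\<lambda>t. xt n (psiU t)) (TU n)) (Sm (Mo n) (Mo n) (\<lambda>t. xt n (psiL t)) (TL n))))"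
proof -
  let ?S = "Sm (Mo n) (Mo n) (xt n)"
  define D1 where "D1 = (\<lambda>j. (Suc j, j)) ` {0..n}"
  define D2 where "D2 = (\<lambda>j. (j, j)) ` {0..n}"
  define R where "R = psiU ` TU n \<union> psiL ` TL n"
  have fR: "finite R" unfolding R_def using TU_fin TL_fin by simp
  have fD: "finite (D1 \<union> D2)" unfolding D1_def D2_def by simp
  have PX: "{0..<Suc (Suc n)} \<times> {0..<Suc (Suc n)} = (D1 \<union> D2) \<union> insert (Suc n, Suc n) (insert (0, Suc n) R)"
  proof (intro equalityI subsetI)
    fix p assume "p \<in> {0..<Suc (Suc n)} \<times> {0..<Suc (Suc n)}"
    then obtain i j where p: "p = (i, j)" and ij: "i < Suc (Suc n)" "j < Suc (Suc n)" by auto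
    consider "i = j" "j \<le> n" | "i = j" "j = Suc n" | "i = Suc j" | "i < j" "(i, j) = (0, Suc n)"
      | "i < j" "(i, j) \<noteq> (0, Suc n)" | "Suc j < i" using ij by linarith
    then show "p \<in> (D1 \<union> D2) \<union> insert (Suc n, Suc n) (insert (0, Suc n) R)"
    proof cases
      case 1 then show ?thesis unfolding p D2_def by auto
    next
      case 2 then show ?thesis unfolding p by auto
    next
      case 3 then show ?thesis using ij unfolding p D1_def by auto
    next
      case 4 then show ?thesis unfolding p by auto
    next
      case 5
      then have "(i, j) = psiU (j - 1, i)" by (simp add: psiU_def)
      moreover have "(j - 1, i) \<in> TU n" using 5 ij unfolding TU_def by auto
      ultimately show ?thesis unfolding p R_def by blast
    next
      case 6
      then have "(i, j) = psiL (j, i - 1)" by (simp add: psiL_def)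
      moreover have "(j, i - 1) \<in> TL n" using 6 ij unfolding TL_def by auto
      ultimately show ?thesis unfolding p R_def by blast
    qed
  next
    fix p assume "p \<in> (D1 \<union> D2) \<union> insert (Suc n, Suc n) (insert (0, Suc n) R)"
    then show "p \<in> {0..<Suc (Suc n)} \<times> {0..<Suc (Suc n)}"
      unfolding D1_def D2_def R_def TU_def TL_def psiU_def psiL_def by auto
  qed
  have disj: "(D1 \<union> D2) \<inter> insert (Suc n, Suc n) (insert (0, Suc n) R) = {}"
    unfolding D1_def D2_def R_def TU_def TL_def psiU_def psiL_def by auto
  have n1: "(Suc n, Suc n) \<notin> insert (0, Suc n) R"
    unfolding R_def TU_def TL_def psiU_def psiL_def by auto
  have n2: "(0, Suc n) \<notin> R"
    unfolding R_def TU_def TL_def psiU_def psiL_def by auto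
  have dUL: "psiU ` TU n \<inter> psiL ` TL n = {}"
    unfolding TU_def TL_def psiU_def psiL_def by auto
  have "bd A Mo Mf n = ?S ((D1 \<union> D2) \<union> insert (Suc n, Suc n) (insert (0, Suc n) R))"
    unfolding bd_Sm' PX ..
  also have "\<dots> = padd A (?S (D1 \<union> D2)) (?S (insert (Suc n, Suc n) (insert (0, Suc n) R)))"
    by (rule Sm_Un) (use fD fR disj xt_h in auto)
  also have "?S (D1 \<union> D2) = pzero A (Mo n) (Mo n)"
    unfolding D1_def D2_def
  proof (rule Sm_cancel)
    show "finite {0..n}" by simp
    show "inj_on (\<lambda>j. (Suc j, j)) {0..n}" by (auto simp: inj_on_def)
    show "inj_on (\<lambda>j. (j, j)) {0..n}" by (auto simp: inj_on_def)
    show "(\<lambda>j. (Suc j, j)) ` {0..n} \<inter> (\<lambda>j. (j, j)) ` {0..n} = {}" by auto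
    fix j assume j: "j \<in> {0..n}"
    have M: "Mf n n id \<in> H (Mo n) (Mo n)" using Mf_h[OF lam_id] by simp
    show "xt n (Suc j, j) = pneg A (xt n (j, j))"
      unfolding xt_def using I1[of j n] I2[of j n] j M negneg[OF psignh[OF M]] sign_suc[OF M] by simp
    show "xt n (j, j) \<in> H (Mo n) (Mo n)" by (rule xt_h)
  qed
  also have "?S (insert (Suc n, Suc n) (insert (0, Suc n) R)) =
      padd A (xt n (Suc n, Suc n)) (padd A (xt n (0, Suc n)) (?S R))"
    using fR n1 n2 xt_h by (simp add: Sm_insert)
  also have "xt n (Suc n, Suc n) = idm A (Mo n)"
    unfolding xt_def using I1[of "Suc n" n] by (simp add: Mf_id psign_def)
  also have "?S R = padd A (?S (psiU ` TU n)) (?S (psiL ` TL n))"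
    unfolding R_def by (rule Sm_Un) (auto simp: TU_fin TL_fin dUL xt_h)
  also have "?S (psiU ` TU n) = Sm (Mo n) (Mo n) (\<lambda>t. xt n (psiU t)) (TU n)"
    by (rule Sm_reindex) (auto simp: inj_on_def psiU_def xt_h prod_eq_iff)
  also have "?S (psiL ` TL n) = Sm (Mo n) (Mo n) (\<lambda>t. xt n (psiL t)) (TL n)"
    by (rule Sm_reindex) (auto simp: inj_on_def psiL_def xt_h prod_eq_iff)
  finally show ?thesis
    by (simp add: xt_h Sm_closed)
qed


lemma sum_Suc: "padd A (bd A Mo Mf (Suc m)) (db A Mo Mf (Suc m)) =
   padd A (idm A (Mo (Suc m))) (padd A (xt (Suc m) (0, Suc (Suc m))) (yt m (Suc m, 0)))"
proof -
  let ?n = "Suc m"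
  let ?a = "Mo (Suc m)"
  let ?Y = "Sm ?a ?a (yt m)"
  have QY: "{0..<Suc (Suc m)} \<times> {0..<Suc (Suc m)} = insert (Suc m, 0) (TU (Suc m) \<union> TL (Suc m))"
    unfolding TU_def TL_def by auto
  have nin: "(Suc m, 0) \<notin> TU (Suc m) \<union> TL (Suc m)" unfolding TU_def TL_def by auto
  have dj: "TU (Suc m) \<inter> TL (Suc m) = {}" unfolding TU_def TL_def by auto
  have Y: "db A Mo Mf (Suc m) = padd A (yt m (Suc m, 0)) (padd A (?Y (TU ?n)) (?Y (TL ?n)))"
    unfolding db_Sm' QY
    using TU_fin TL_fin nin dj yt_h by (simp add: Sm_insert Sm_Un)
  have eU: "xt ?n (psiU t) = pneg A (yt m t)" if t: "t \<in> TU ?n" for t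
  proof -
    obtain k l where tt: "t = (k, l)" by (cases t)
    have c: "l \<le> k" "k \<le> Suc m" "(k, l) \<noteq> (Suc m, 0)" using t unfolding tt TU_def by auto
    have M: "Mf ?n ?n (eps (Suc m) l \<circ> eta m k) \<in> H ?a ?a" using Mf_h[OF lam_comp[OF eta_in eps_in]] by simp
    show ?thesis unfolding tt xt_def yt_def psiU_def using I3[OF c] sign_suc[OF M] by (simp add: add.commute)
  qed
  have eL: "xt ?n (psiL t) = pneg A (yt m t)" if t: "t \<in> TL ?n" for t
  proof -
    obtain k l where tt: "t = (k, l)" by (cases t)
    have c: "k < l" "l \<le> Suc m" using t unfolding tt TL_def by auto
    have M: "Mf ?n ?n (eps (Suc m) l \<circ> eta m k) \<in> H ?a ?a" using Mf_h[OF lam_comp[OF eta_in eps_in]] by simp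
    show ?thesis unfolding tt xt_def yt_def psiL_def using I4[OF c] sign_suc[OF M] by (simp add: add.commute)
  qed
  have zU: "padd A (Sm ?a ?a (\<lambda>t. xt ?n (psiU t)) (TU ?n)) (?Y (TU ?n)) = pzero A ?a ?a"
  proof -
    have "padd A (Sm ?a ?a (\<lambda>t. xt ?n (psiU t)) (TU ?n)) (?Y (TU ?n)) =
        Sm ?a ?a (\<lambda>t. padd A (xt ?n (psiU t)) (yt m t)) (TU ?n)"
      by (rule Sm_add[symmetric]) (simp_all add: xt_h yt_h)
    also have "\<dots> = pzero A ?a ?a" by (rule Sm_zero) (simp add: eU negl[OF yt_h])
    finally show ?thesis .
  qed
  have zL: "padd A (Sm ?a ?a (\<lambda>t. xt ?n (psiL t)) (TL ?n)) (?Y (TL ?n)) = pzero A ?a ?a"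
  proof -
    have "padd A (Sm ?a ?a (\<lambda>t. xt ?n (psiL t)) (TL ?n)) (?Y (TL ?n)) =
        Sm ?a ?a (\<lambda>t. padd A (xt ?n (psiL t)) (yt m t)) (TL ?n)"
      by (rule Sm_add[symmetric]) (simp_all add: xt_h yt_h)
    also have "\<dots> = pzero A ?a ?a" by (rule Sm_zero) (simp add: eL negl[OF yt_h])
    finally show ?thesis .
  qed
  show ?thesis unfolding bd_dec[of ?n] Y
    by (rule ac6[OF idh xt_h yt_h _ _ _ _ zU zL]) (simp_all add: Sm_closed xt_h yt_h)
qed

lemma kap_Suc: "padd A (xt (Suc m) (0, Suc (Suc m))) (yt m (Suc m, 0)) = pneg A (kappa A Mo Mf (Suc m))"
proof -
  let ?a = "Mo (Suc m)"
  let ?M1 = "Mf (Suc m) (Suc m) (eta (Suc m) (Suc (Suc m)) \<circ> eps (Suc (Suc m)) 0)"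
  let ?M2 = "Mf (Suc m) (Suc m) (eps (Suc m) 0 \<circ> eta m (Suc m))"
  have M1: "?M1 \<in> H ?a ?a" using Mf_h[OF lam_comp[OF eps_in eta_in]] by simp
  have M2: "?M2 \<in> H ?a ?a" using Mf_h[OF lam_comp[OF eta_in eps_in]] by simp
  have P1: "cmp A (face Mf (Suc (Suc m)) 0) (dgn Mf (Suc m) (Suc (Suc m))) = ?M1"
    unfolding face_eq dgn_eq by (rule Mf_comp[OF eps_in eta_in])
  have P2: "cmp A (dgn Mf m (Suc m)) (face Mf (Suc m) 0) = ?M2"
    unfolding face_eq dgn_eq by (rule Mf_comp[OF eta_in eps_in])
  have k: "kappa A Mo Mf (Suc m) = psign A (Suc m) (psub A ?M1 ?M2)"
    unfolding kappa_def using P1 P2 by simp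
  have "pneg A (kappa A Mo Mf (Suc m)) = pneg A (padd A (psign A (Suc m) ?M1) (pneg A (psign A (Suc m) ?M2)))"
    unfolding k psub_def using M1 M2 by (simp add: psign_add[OF M1 negh[OF M2]] psign_neg[OF M2])
  also have "\<dots> = padd A (pneg A (psign A (Suc m) ?M1)) (psign A (Suc m) ?M2)"
    using M1 M2 by (simp add: neg_add[OF psignh[OF M1] negh[OF psignh[OF M2]]] negneg[OF psignh[OF M2]])
  also have "\<dots> = padd A (xt (Suc m) (0, Suc (Suc m))) (yt m (Suc m, 0))"
    unfolding xt_def yt_def using sign_suc[OF M1] by simp
  finally show ?thesis by (rule sym)
qed

lemma kap_0: "xt 0 (0, 1) = pneg A (kappa A Mo Mf 0)"
proof -
  let ?a = "Mo 0"
  let ?M1 = "Mf 0 0 (eta 0 1 \<circ> eps 1 0)"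
  have M1: "?M1 \<in> H ?a ?a" using Mf_h[OF lam_comp[OF eps_in eta_in]] by simp
  have P1: "cmp A (face Mf 1 0) (dgn Mf 0 1) = ?M1"
    using face_eq[of 0 0] dgn_eq[of 0 1] Mf_comp[OF eps_in[of 0 0] eta_in[of 0 1]] by simp
  have k: "kappa A Mo Mf 0 = ?M1"
    unfolding kappa_def psub_def using P1 M1 by (simp add: psign_def)
  show ?thesis unfolding k xt_def using M1 by (simp add: psign_def)
qed

lemma sum_all: "padd A (bd A Mo Mf n) (db A Mo Mf n) = padd A (idm A (Mo n)) (pneg A (kappa A Mo Mf n))"
proof (cases n)
  case 0
  have e: "TU 0 = {}" "TL 0 = {}" unfolding TU_def TL_def by auto
  have "padd A (bd A Mo Mf 0) (db A Mo Mf 0) = bd A Mo Mf 0"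
    using bd_h[of 0] by (simp add: db_def)
  also have "\<dots> = padd A (idm A (Mo 0)) (xt 0 (0, 1))"
    unfolding bd_dec[of 0] e using xt_h[of 0] by simp
  finally show ?thesis unfolding 0 kap_0 .
next
  case (Suc m)
  show ?thesis unfolding Suc sum_Suc kap_Suc ..
qed

lemma XY0: "cmp A (bd A Mo Mf n) (db A Mo Mf n) = pzero A (Mo n) (Mo n)"
proof (cases n)
  case 0 then show ?thesis using bd_h[of 0] by (simp add: db_def)
next
  case (Suc m)
  let ?B1 = "bmap A Mo Mf (Suc (Suc m))" and ?D0 = "dmap A Mo Mf (Suc m)"
    and ?D' = "dmap A Mo Mf m" and ?B0 = "bmap A Mo Mf (Suc m)"
  have h: "?B1 \<in> H (Mo (Suc (Suc m))) (Mo (Suc m))" "?D0 \<in> H (Mo (Suc m)) (Mo (Suc (Suc m)))"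
      "?D' \<in> H (Mo m) (Mo (Suc m))" "?B0 \<in> H (Mo (Suc m)) (Mo m)"
    by (rule bmap_h dmap_h)+
  have c1: "cmp A ?D' ?B0 \<in> H (Mo (Suc m)) (Mo (Suc m))" by (rule cmph[OF h(4) h(3)])
  have "cmp A (cmp A ?B1 ?D0) (cmp A ?D' ?B0) = cmp A ?B1 (cmp A ?D0 (cmp A ?D' ?B0))"
    by (rule cassoc[OF c1 h(2) h(1), symmetric])
  also have "cmp A ?D0 (cmp A ?D' ?B0) = cmp A (cmp A ?D0 ?D') ?B0"
    by (rule cassoc[OF h(4) h(3) h(2)])
  also have "\<dots> = pzero A (Mo (Suc m)) (Mo (Suc (Suc m)))" using dd0[of m] h by simp
  finally show ?thesis unfolding Suc bd_def db_def using h by simp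
qed

lemma YX0: "cmp A (db A Mo Mf n) (bd A Mo Mf n) = pzero A (Mo n) (Mo n)"
proof (cases n)
  case 0 then show ?thesis using bd_h[of 0] by (simp add: db_def)
next
  case (Suc m)
  let ?B1 = "bmap A Mo Mf (Suc (Suc m))" and ?D0 = "dmap A Mo Mf (Suc m)"
    and ?D' = "dmap A Mo Mf m" and ?B0 = "bmap A Mo Mf (Suc m)"
  have h: "?B1 \<in> H (Mo (Suc (Suc m))) (Mo (Suc m))" "?D0 \<in> H (Mo (Suc m)) (Mo (Suc (Suc m)))"
      "?D' \<in> H (Mo m) (Mo (Suc m))" "?B0 \<in> H (Mo (Suc m)) (Mo m)"
    by (rule bmap_h dmap_h)+
  have c1: "cmp A ?B1 ?D0 \<in> H (Mo (Suc m)) (Mo (Suc m))" by (rule cmph[OF h(2) h(1)])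
  have "cmp A (cmp A ?D' ?B0) (cmp A ?B1 ?D0) = cmp A ?D' (cmp A ?B0 (cmp A ?B1 ?D0))"
    by (rule cassoc[OF c1 h(4) h(3), symmetric])
  also have "cmp A ?B0 (cmp A ?B1 ?D0) = cmp A (cmp A ?B0 ?B1) ?D0"
    by (rule cassoc[OF h(2) h(1) h(4)])
  also have "\<dots> = pzero A (Mo (Suc m)) (Mo m)" using bb0[of m] h by simp
  finally show ?thesis unfolding Suc bd_def db_def using h by simp
qed

lemma kappa_h: "kappa A Mo Mf n \<in> H (Mo n) (Mo n)"
proof (cases n)
  case 0
  have "cmp A (face Mf (Suc 0) 0) (dgn Mf 0 (Suc 0)) \<in> H (Mo 0) (Mo 0)"
    by (rule cmph[OF dgn_h face_h])
  then show ?thesis unfolding 0 kappa_def psub_def by simp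
next
  case (Suc m)
  have "cmp A (face Mf (Suc (Suc m)) 0) (dgn Mf (Suc m) (Suc (Suc m))) \<in> H (Mo (Suc m)) (Mo (Suc m))"
    by (rule cmph[OF dgn_h face_h])
  moreover have "cmp A (dgn Mf m (Suc m)) (face Mf (Suc m) 0) \<in> H (Mo (Suc m)) (Mo (Suc m))"
    by (rule cmph[OF face_h dgn_h])
  ultimately show ?thesis unfolding Suc kappa_def psub_def by simp
qed

lemma main: "kappa A Mo Mf n =
           cmp A (psub A (idm A (Mo n)) (bd A Mo Mf n)) (psub A (idm A (Mo n)) (db A Mo Mf n))
       \<and> kappa A Mo Mf n =
           cmp A (psub A (idm A (Mo n)) (db A Mo Mf n)) (psub A (idm A (Mo n)) (bd A Mo Mf n))"
proof
  have S: "padd A (bd A Mo Mf n) (db A Mo Mf n) = padd A (idm A (Mo n)) (pneg A (kappa A Mo Mf n))"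
    by (rule sum_all)
  have S': "padd A (db A Mo Mf n) (bd A Mo Mf n) = padd A (idm A (Mo n)) (pneg A (kappa A Mo Mf n))"
    using S acomm[OF bd_h db_h] by simp
  show "kappa A Mo Mf n =
           cmp A (psub A (idm A (Mo n)) (bd A Mo Mf n)) (psub A (idm A (Mo n)) (db A Mo Mf n))"
    unfolding expand[OF bd_h db_h XY0] by (rule fin[OF bd_h db_h kappa_h idh S])
  show "kappa A Mo Mf n =
           cmp A (psub A (idm A (Mo n)) (db A Mo Mf n)) (psub A (idm A (Mo n)) (bd A Mo Mf n))"
    unfolding expand[OF db_h bd_h YX0] by (rule fin[OF db_h bd_h kappa_h idh S'])
qed

end

lemma dupI: "duplicial A Mo Mf \<Longrightarrow> dup A Mo Mf"
  unfolding dup_def dup_axioms_def pa_def by (simp add: duplicial_def)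

theorem mainTheorem10:
  fixes A :: "('o, 'm, 'x) preadd_cat_scheme"
    and Mo :: "nat \<Rightarrow> 'o" and Mf :: "nat \<Rightarrow> nat \<Rightarrow> (int \<Rightarrow> int) \<Rightarrow> 'm"
  assumes "duplicial A Mo Mf"
  shows "kappa A Mo Mf n =
           cmp A (psub A (idm A (Mo n)) (bd A Mo Mf n)) (psub A (idm A (Mo n)) (db A Mo Mf n))
       \<and> kappa A Mo Mf n =
           cmp A (psub A (idm A (Mo n)) (db A Mo Mf n)) (psub A (idm A (Mo n)) (bd A Mo Mf n))"
  by (rule dup.main[OF dupI[OF assms]])

end
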